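(* Let $\mathbf C$ be an admissible category of lattices and $X$ a convergence space. The map $\eta_X:X\to\mathrm{pt}(\mathbb P X)$, sending $x$ to the point $S\mapsto 1$ if $x\in S$ and $S\mapsto\emptyset$ otherwise, is injective and initial, i.e. for every filter $\mathcal F$ of subsets of $X$ and every $x\in X$, $\mathcal F\to x$ in $X$ if and only if $\eta_X[\mathcal F]\to\eta_X(x)$ in $\mathrm{pt}(\mathbb P X)$. Moreover, $\eta_X$ is an isomorphism of convergence spaces if $\mathbf C$ is an admissible category of frames or an admissible category of coframes.
   Context: A filter on an inf-semilattice $L$ is a non-empty upward-closed subset closed under binary meets ($L$ itself allowed); $\mathbb F L$ is the set of filters. $\mathbb P(X)$ is the powerset of $X$. A category of lattices has lattices as objects and lattice morphisms (preserving finite suprema and infima) as morphisms; it is admissible if every $\mathbb P(X)$ is an object and there are classes of index sets $\mathcal I,\mathcal J$ such that morphisms $L\to L'$ are exactly monotone maps preserving all existing $I$-indexed infima ($I\in\mathcal I$) and $J$-indexed suprema ($J\in\mathcal J$). Categories of frames/coframes (with frame/coframe morphisms) are understood analogously. A convergence $\mathbf C$-object is $(L,\lim_L)$ with $\lim_L:\mathbb F L\to L$ monotone; morphisms $\varphi:L\to L'$ in $\mathbf C^{\mathrm{conv}}$ are $\mathbf C$-morphisms with $\lim_{L'}\mathcal F\le\varphi(\lim_L\varphi^{-1}(\mathcal F))$. A convergence space is a set $X$ with a relation $\to$ between filters of subsets and points such that $\dot x=\{S:x\in S\}\to x$ and convergence is preserved by enlarging the filter. For $f:X\to Y$, $f[\mathcal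 F]=\{B\subseteq Y:f^{-1}(B)\in\mathcal F\}$. $\mathbb P X$ denotes the convergence $\mathbf C$-object $(\mathbb P(X),\lim)$ with $\lim\mathcal F=\{x:\mathcal F\to x\}$. With $1=\{*\}$, $\mathbb P(1)=\{\emptyset,1\}$ and $\lim_{\mathbb P(1)}$ constantly $1$, the points of a convergence $\mathbf C$-object $L$ are the $\mathbf C^{\mathrm{conv}}$-morphisms $L\to\mathbb P(1)$; $\mathrm{pt}\,L$ is the set of points, $\ell^\bullet=\{\varphi\in\mathrm{pt}\,L:\varphi(\ell)=1\}$, $\mathcal F^\circ=\{\ell:\ell^\bullet\in\mathcal F\}$ for filters $\mathcal F$ of subsets of $\mathrm{pt}\,L$, and $\mathcal F\to\varphi$ in $\mathrm{pt}\,L$ iff $\varphi\in(\lim_L\mathcal F^\circ)^\bullet$. *)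

theory Defs
  imports Main
begin

datatype cat_kind = Lattices | Frames | Coframes

text \<open>Filters on an inf-semilattice (the whole lattice allowed).\<close>
definition lat_filter :: "'a::lattice set \<Rightarrow> bool" where
  "lat_filter F \<longleftrightarrow> F \<noteq> {} \<and> (\<forall>a\<in>F. \<forall>b. a \<le> b \<longrightarrow> b \<in> F) \<and> (\<forall>a\<in>F. \<forall>b\<in>F. inf a b \<in> F)"

text \<open>Morphisms of an admissible category (classes of index sets II, JJ) between
  complete lattices (all infima/suprema exist).\<close>
definition C_morph :: "cat_kind \<Rightarrow> 'i set set \<Rightarrow> 'j set set
     \<Rightarrow> ('a::complete_lattice \<Rightarrow> 'b::complete_lattice) \<Rightarrow> bool" where
  "C_morph k II JJ \<phi> \<longleftrightarrow>
     mono \<phi> \<and> \<phi> top = top \<and> \<phi> bot = bot \<and>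
     (\<forall>a b. \<phi> (inf a b) = inf (\<phi> a) (\<phi> b)) \<and>
     (\<forall>a b. \<phi> (sup a b) = sup (\<phi> a) (\<phi> b)) \<and>
     (\<forall>I\<in>II. \<forall>f :: 'i \<Rightarrow> 'a. \<phi> (INF i\<in>I. f i) = (INF i\<in>I. \<phi> (f i))) \<and>
     (\<forall>J\<in>JJ. \<forall>f :: 'j \<Rightarrow> 'a. \<phi> (SUP j\<in>J. f j) = (SUP j\<in>J. \<phi> (f j))) \<and>
     (k = Frames \<longrightarrow> (\<forall>A. \<phi> (Sup A) = Sup (\<phi> ` A))) \<and>
     (k = Coframes \<longrightarrow> (\<forall>A. \<phi> (Inf A) = Inf (\<phi> ` A)))"

definition conv_morph :: "('a::lattice set \<Rightarrow> 'a) \<Rightarrow> ('b::lattice set \<Rightarrow> 'b) \<Rightarrow> ('a \<Rightarrow> 'b) \<Rightarrow> bool" where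
  "conv_morph limA limB \<phi> \<longleftrightarrow> (\<forall>G. lat_filter G \<longrightarrow> limB G \<le> \<phi> (limA (\<phi> -` G)))"

definition filter_on :: "'a set \<Rightarrow> 'a set set \<Rightarrow> bool" where
  "filter_on A F \<longleftrightarrow> F \<noteq> {} \<and> F \<subseteq> Pow A \<and> (\<forall>S\<in>F. \<forall>T. S \<subseteq> T \<and> T \<subseteq> A \<longrightarrow> T \<in> F)
      \<and> (\<forall>S\<in>F. \<forall>T\<in>F. S \<inter> T \<in> F)"

definition dot_on :: "'a set \<Rightarrow> 'a \<Rightarrow> 'a set set" where
  "dot_on A x = {S. S \<subseteq> A \<and> x \<in> S}"

definition conv_space :: "'a set \<Rightarrow> ('a set set \<Rightarrow> 'a \<Rightarrow> bool) \<Rightarrow> bool" where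
  "conv_space A c \<longleftrightarrow> (\<forall>x\<in>A. c (dot_on A x) x) \<and>
     (\<forall>F G x. filter_on A F \<and> filter_on A G \<and> F \<subseteq> G \<and> x \<in> A \<and> c F x \<longrightarrow> c G x)"

definition img_filter :: "('a \<Rightarrow> 'b) \<Rightarrow> 'a set \<Rightarrow> 'b set \<Rightarrow> 'a set set \<Rightarrow> 'b set set" where
  "img_filter f A B F = {S. S \<subseteq> B \<and> f -` S \<inter> A \<in> F}"

definition conv_continuous :: "'a set \<Rightarrow> ('a set set \<Rightarrow> 'a \<Rightarrow> bool) \<Rightarrow> 'b set
     \<Rightarrow> ('b set set \<Rightarrow> 'b \<Rightarrow> bool) \<Rightarrow> ('a \<Rightarrow> 'b) \<Rightarrow> bool" where
  "conv_continuous A cA B cB f \<longleftrightarrow> f ` A \<subseteq> B \<and>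
     (\<forall>F x. filter_on A F \<and> x \<in> A \<and> cA F x \<longrightarrow> cB (img_filter f A B F) (f x))"

definition conv_iso :: "'a set \<Rightarrow> ('a set set \<Rightarrow> 'a \<Rightarrow> bool) \<Rightarrow> 'b set
     \<Rightarrow> ('b set set \<Rightarrow> 'b \<Rightarrow> bool) \<Rightarrow> ('a \<Rightarrow> 'b) \<Rightarrow> bool" where
  "conv_iso A cA B cB f \<longleftrightarrow> bij_betw f A B \<and> conv_continuous A cA B cB f
     \<and> conv_continuous B cB A cA (inv_into A f)"

text \<open>The convergence C-object P X, and P(1) with P(1) = unit set, lim constantly 1.\<close>
definition limP :: "('x set set \<Rightarrow> 'x \<Rightarrow> bool) \<Rightarrow> 'x set set \<Rightarrow> 'x set" where
  "limP conv F = {x. conv F x}"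

definition limP1 :: "unit set set \<Rightarrow> unit set" where
  "limP1 G = UNIV"

definition pts :: "cat_kind \<Rightarrow> 'i set set \<Rightarrow> 'j set set \<Rightarrow> ('x set set \<Rightarrow> 'x \<Rightarrow> bool)
     \<Rightarrow> ('x set \<Rightarrow> unit set) set" where
  "pts k II JJ conv = {\<phi>. C_morph k II JJ \<phi> \<and> conv_morph (limP conv) limP1 \<phi>}"

definition bullet :: "('x set \<Rightarrow> unit set) set \<Rightarrow> 'x set \<Rightarrow> ('x set \<Rightarrow> unit set) set" where
  "bullet P l = {\<phi>\<in>P. \<phi> l = UNIV}"

definition circ :: "('x set \<Rightarrow> unit set) set \<Rightarrow> ('x set \<Rightarrow> unit set) set set \<Rightarrow> 'x set set" where
  "circ P G = {l. bullet P l \<in> G}"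

definition pt_conv :: "cat_kind \<Rightarrow> 'i set set \<Rightarrow> 'j set set \<Rightarrow> ('x set set \<Rightarrow> 'x \<Rightarrow> bool)
     \<Rightarrow> ('x set \<Rightarrow> unit set) set set \<Rightarrow> ('x set \<Rightarrow> unit set) \<Rightarrow> bool" where
  "pt_conv k II JJ conv G \<phi> \<longleftrightarrow>
     \<phi> \<in> bullet (pts k II JJ conv) (limP conv (circ (pts k II JJ conv) G))"

definition eta :: "'x \<Rightarrow> ('x set \<Rightarrow> unit set)" where
  "eta x = (\<lambda>S. if x \<in> S then UNIV else {})"

end

theory Submission
  imports Defs
begin

lemma unit_set_cases: "(A::unit set) = {} \<or> A = UNIV"
  by auto

lemma eta_UNIV: "(eta x l = (UNIV::unit set)) \<longleftrightarrow> x \<in> l"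
  by (simp add: eta_def)

lemma eta_mem: "(u \<in> (eta x l :: unit set)) \<longleftrightarrow> x \<in> l"
  by (simp add: eta_def)

lemma e1: "x \<in> S \<Longrightarrow> eta x S = UNIV" by (simp add: eta_def)
lemma e2: "x \<notin> S \<Longrightarrow> eta x S = {}" by (simp add: eta_def)
lemma a1: assumes "UNIV \<in> G" shows "dot_on UNIV x \<subseteq> (eta x :: 'x set \<Rightarrow> unit set) -` G"
proof
  fix S assume "S \<in> dot_on UNIV x" then have "x\<in>S" by (simp add: dot_on_def)
  then show "S \<in> (eta x :: 'x set \<Rightarrow> unit set) -` G" using assms e1[of x S] by simp
qed
lemma a2: assumes "UNIV \<in> G" "{} \<in> G" shows "(eta x :: 'x set \<Rightarrow> unit set) -` G = UNIV"
proof (rule set_eqI)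
  fix S show "S \<in> (eta x :: 'x set \<Rightarrow> unit set) -` G \<longleftrightarrow> S \<in> UNIV"
    using assms e1[of x S] e2[of x S] by (cases "x \<in> S") simp_all
qed
lemma a3: assumes "UNIV \<in> G" "{} \<notin> G" shows "(eta x :: 'x set \<Rightarrow> unit set) -` G = dot_on UNIV x"
proof (rule set_eqI)
  fix S show "S \<in> (eta x :: 'x set \<Rightarrow> unit set) -` G \<longleftrightarrow> S \<in> dot_on UNIV x"
    using assms e1[of x S] e2[of x S] by (cases "x \<in> S") (simp_all add: dot_on_def)
qed

lemma eta_in_pts:
  assumes cs: "conv_space UNIV conv"
  shows "(eta x :: 'x set \<Rightarrow> unit set) \<in> pts k II JJ conv"
proof -
  have cm: "C_morph k II JJ (eta x :: 'x set \<Rightarrow> unit set)"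
    unfolding C_morph_def eta_def
    by (auto simp: mono_def)
  have "conv_morph (limP conv) limP1 (eta x :: 'x set \<Rightarrow> unit set)"
    unfolding conv_morph_def
  proof (intro allI impI)
    fix G :: "unit set set" assume G: "lat_filter G"
    then have ne: "G \<noteq> {}" and up: "\<forall>a\<in>G. \<forall>b. a \<le> b \<longrightarrow> b \<in> G"
      unfolding lat_filter_def by simp_all
    from ne obtain a where a: "a \<in> G" by blast
    have U: "UNIV \<in> G" using up a by blast
    let ?H = "(eta x :: 'x set \<Rightarrow> unit set) -` G"
    have dsub: "dot_on UNIV x \<subseteq> ?H" using a1[OF U] .
    have fd: "filter_on UNIV (dot_on UNIV x)" unfolding filter_on_def dot_on_def by blast
    have fH: "filter_on UNIV ?H"
    proof (cases "{} \<in> G")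
      case True
      have "?H = UNIV" by (rule a2[OF U True])
      then show ?thesis by (simp add: filter_on_def)
    next
      case False
      have "?H = dot_on UNIV x" by (rule a3[OF U False])
      then show ?thesis using fd by simp
    qed
    have "conv (dot_on UNIV x) x" using cs by (simp add: conv_space_def)
    moreover have "\<And>F G y. filter_on UNIV F \<Longrightarrow> filter_on UNIV G \<Longrightarrow> F \<subseteq> G \<Longrightarrow> conv F y \<Longrightarrow> conv G y"
      using cs unfolding conv_space_def by blast
    ultimately have "conv ?H x" using fd fH dsub by blast
    then show "limP1 G \<le> eta x (limP conv ?H)"
      by (simp add: limP_def limP1_def eta_def)
  qed
  with cm show ?thesis by (simp add: pts_def)
qed

lemma bullet_eta:
  assumes "\<forall>x. eta x \<in> P"
  shows "eta -` bullet P l = l"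
  using assms by (auto simp: bullet_def eta_def)

lemma circ_img:
  assumes "\<forall>x. eta x \<in> P" "filter_on UNIV F"
  shows "circ P (img_filter eta UNIV P F) = F"
proof -
  have "bullet P l \<subseteq> P" for l by (auto simp: bullet_def)
  then show ?thesis using bullet_eta[OF assms(1)]
  by (simp add: circ_def img_filter_def)
qed

lemma pts_surj:
  assumes "k = Frames \<or> k = Coframes" and "\<phi> \<in> pts k II JJ conv"
  shows "\<exists>x. \<phi> = eta x"
proof -
  have cm: "C_morph k II JJ \<phi>" using assms(2) by (simp add: pts_def)
  have top: "\<phi> UNIV = UNIV" using cm unfolding C_morph_def by simp
  have bot: "\<phi> {} = {}" using cm unfolding C_morph_def by simp
  have inf: "\<And>a b. \<phi> (a \<inter> b) = \<phi> a \<inter> \<phi> b" using cm unfolding C_morph_def by simp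
  have sup: "\<And>a b. \<phi> (a \<union> b) = \<phi> a \<union> \<phi> b" using cm unfolding C_morph_def by simp
  show ?thesis using assms(1)
  proof
    assume kf: "k = Frames"
    then have supA: "\<And>A. \<phi> (\<Union>A) = \<Union>(\<phi> ` A)" using cm unfolding C_morph_def by auto
    define U where "U = \<Union>{S. \<phi> S = {}}"
    have pU: "\<phi> U = {}" unfolding U_def supA by auto
    have "U \<noteq> UNIV" using pU top by auto
    then obtain x where xU: "x \<notin> U" by auto
    have A: "\<phi> S = UNIV" if "x \<in> S" for S
    proof -
      have "\<phi> S \<noteq> {}" using that xU unfolding U_def by auto
      then show ?thesis using unit_set_cases by blast
    qed
    have B: "\<phi> S = {}" if "x \<notin> S" for S
    proof (rule ccontr)
      assume "\<phi> S \<noteq> {}"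
      then have "\<phi> S = UNIV" using unit_set_cases by blast
      moreover have "\<phi> {x} = UNIV" using A by simp
      moreover have "S \<inter> {x} = {}" using that by auto
      ultimately show False using inf[of S "{x}"] bot by simp
    qed
    have "\<phi> = eta x" by (rule ext) (auto simp: eta_def A B)
    then show ?thesis by blast
  next
    assume kf: "k = Coframes"
    then have infA: "\<And>A. \<phi> (\<Inter>A) = \<Inter>(\<phi> ` A)" using cm unfolding C_morph_def by auto
    define V where "V = \<Inter>{S. \<phi> S = UNIV}"
    have pV: "\<phi> V = UNIV" unfolding V_def infA by auto
    have "V \<noteq> {}" using pV bot by auto
    then obtain x where xV: "x \<in> V" by auto
    have B: "\<phi> S = {}" if "x \<notin> S" for S
    proof -
      have "\<phi> S \<noteq> UNIV" using that xV unfolding V_def by auto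
      then show ?thesis using unit_set_cases by blast
    qed
    have A: "\<phi> S = UNIV" if "x \<in> S" for S
    proof -
      have "\<phi> (- S) = {}" using B that by simp
      moreover have "S \<union> - S = UNIV" by auto
      ultimately show ?thesis using sup[of S "- S"] top by simp
    qed
    have "\<phi> = eta x" by (rule ext) (auto simp: eta_def A B)
    then show ?thesis by blast
  qed
qed

theorem mainTheorem3:
  fixes k :: cat_kind and II :: "'i set set" and JJ :: "'j set set"
    and conv :: "'x set set \<Rightarrow> 'x \<Rightarrow> bool"
  assumes "conv_space UNIV conv"
  shows "(\<forall>x. (eta x :: 'x set \<Rightarrow> unit set) \<in> pts k II JJ conv)
    \<and> inj (eta :: 'x \<Rightarrow> 'x set \<Rightarrow> unit set)
    \<and> (\<forall>F x. filter_on UNIV F \<longrightarrow>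
          (conv F x \<longleftrightarrow> pt_conv k II JJ conv (img_filter eta UNIV (pts k II JJ conv) F) (eta x)))
    \<and> (k = Frames \<or> k = Coframes \<longrightarrow>
          conv_iso UNIV conv (pts k II JJ conv) (pt_conv k II JJ conv) eta)"
proof -
  let ?P = "pts k II JJ conv"
  have E: "\<forall>x. (eta x :: 'x set \<Rightarrow> unit set) \<in> ?P" using eta_in_pts[OF assms] by blast
  have I: "inj (eta :: 'x \<Rightarrow> 'x set \<Rightarrow> unit set)"
  proof (rule injI)
    fix x y :: 'x assume "eta x = (eta y :: 'x set \<Rightarrow> unit set)"
    then have "eta x {x} = (eta y {x} :: unit set)" by simp
    then show "x = y" by (auto simp: eta_def split: if_splits)
  qed
  have C: "conv F x \<longleftrightarrow> pt_conv k II JJ conv (img_filter eta UNIV ?P F) (eta x)"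
    if "filter_on UNIV F" for F x
    using circ_img[OF E that] E
    by (simp add: pt_conv_def bullet_def limP_def eta_def)
  have D: "conv_iso UNIV conv ?P (pt_conv k II JJ conv) eta" if k: "k = Frames \<or> k = Coframes"
  proof -
    have R: "?P = range eta" using E pts_surj[OF k] by blast
    have bij: "bij_betw eta UNIV ?P" using I R by (simp add: bij_betw_def)
    have c1: "conv_continuous UNIV conv ?P (pt_conv k II JJ conv) eta"
      unfolding conv_continuous_def using E C by auto
    have c2: "conv_continuous ?P (pt_conv k II JJ conv) UNIV conv (inv_into UNIV eta)"
      unfolding conv_continuous_def
    proof (intro conjI allI impI)
      show "inv_into UNIV eta ` ?P \<subseteq> UNIV" by simp
      fix G \<phi> assume h: "filter_on ?P G \<and> \<phi> \<in> ?P \<and> pt_conv k II JJ conv G \<phi>"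
      then obtain x where x: "\<phi> = eta x" using R by auto
      have ix: "inv_into UNIV eta \<phi> = x" using x I by simp
      have pre: "inv_into UNIV eta -` S \<inter> ?P = eta ` S" for S
        using R I by auto
      have bl: "bullet ?P l = eta ` l" for l
        using R by (auto simp: bullet_def eta_UNIV eta_mem)
      have "img_filter (inv_into UNIV eta) ?P UNIV G = circ ?P G"
        by (simp add: img_filter_def circ_def pre bl)
      moreover have "eta x (limP conv (circ ?P G)) = (UNIV :: unit set)" using h x
        by (simp add: pt_conv_def bullet_def)
      then have "conv (circ ?P G) x" by (simp only: eta_UNIV limP_def mem_Collect_eq)
      ultimately show "conv (img_filter (inv_into UNIV eta) ?P UNIV G) (inv_into UNIV eta \<phi>)"
        using ix by simp
    qed
    show ?thesis using bij c1 c2 by (simp add: conv_iso_def)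
  qed
  show ?thesis using E I C D by blast
qed

end
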